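(* Let $\Delta$ be a lattice $d$-simplex in $\mathbb{R}^d$ which is an antichain simplex, and let $K$ be a field. Then the $\mathbb{Z}^{d+1}$-graded Poincaré series of $K$ over $\mathrm{FPA}(\Delta)$ is \[ P^K_{\mathrm{FPA}(\Delta)}(z;\mathbf{t})=\left(1-\sum_{\sigma\in P(\Delta),\ \sigma\neq0} z\,\mathbf{t}^{\sigma}\right)^{-1}, \] and in particular this Poincaré series is rational.
   Context: For a lattice $d$-simplex $\Delta$ with vertices $v_0,\dots,v_d\in\mathbb{Z}^d$, the fundamental parallelepiped is $\Pi_\Delta=\{\sum_{i=0}^d\gamma_i(1,v_i):0\le\gamma_i<1\}\subset\mathbb{R}^{d+1}$. The fundamental parallelepiped poset $P(\Delta)$ is the set $\Pi_\Delta\cap\mathbb{Z}^{d+1}$ with $\sigma\preceq\mu$ iff $\mu-\sigma\in\Pi_\Delta\cap\mathbb{Z}^{d+1}$. $\Delta$ is an antichain simplex if $P(\Delta)\setminus\{0\}$ has no relations between distinct elements. The fundamental parallelepiped algebra $\mathrm{FPA}(\Delta)$ is the $K$-algebra with $K$-basis $\{e_\sigma:\sigma\in\Pi_\Delta\cap\mathbb{Z}^{d+1}\}$ and multiplication $e_\sigma e_\mu=e_{\sigma+\mu}$ if $\sigma+\mu\in\Pi_\Delta\cap\mathbb{Z}^{d+1}$ and $e_\sigma e_\mu=0$ otherwise; it is $\mathbb{Z}^{d+1}$-graded with $e_\sigma$ in degree $\sigma$, and $K=\mathrm{FPA}(\Delta)/\mathfrak m$ where $\mathfrak m$ is spanned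 by the $e_\sigma$, $\sigma\ne0$. For a graded algebra $R$ and graded module $M$, $\beta^R_{i,\alpha}(M)$ is the dimension of the degree-$\alpha$ part of the $i$-th homology of $K\otimes_R F$ for a graded free resolution $F$ of $M$ (i.e. $\dim_K\mathrm{Tor}^R_i(K,M)_\alpha$), and the Poincaré series is $P^M_R(z;\mathbf t)=\sum_{\alpha}\sum_{i\ge0}\beta^R_{i,\alpha}(M)z^i\mathbf t^\alpha$, with $\mathbf t^\alpha=t_0^{\alpha_0}\cdots t_d^{\alpha_d}$. *)

theory Defs
  imports "HOL-Analysis.Analysis" "HOL-Library.Function_Algebras"
begin

text \<open>Lattice points of Z^(d+1) are int lists of length d+1 (coordinate 0 is the
homogenising coordinate). A lattice d-simplex is given by its vertices v 0, ..., v d,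
each an int list of length d.\<close>

definition hvert :: "(nat \<Rightarrow> int list) \<Rightarrow> nat \<Rightarrow> int list" where
  "hvert v i = 1 # v i"

definition lzero :: "nat \<Rightarrow> int list" where
  "lzero d = replicate (Suc d) 0"

definition ladd :: "int list \<Rightarrow> int list \<Rightarrow> int list" where
  "ladd x y = map2 (+) x y"

definition lsub :: "int list \<Rightarrow> int list \<Rightarrow> int list" where
  "lsub x y = map2 (-) x y"

definition lsum :: "nat \<Rightarrow> int list list \<Rightarrow> int list" where
  "lsum d s = foldr ladd s (lzero d)"

definition lattice_simplex :: "nat \<Rightarrow> (nat \<Rightarrow> int list) \<Rightarrow> bool" where
  "lattice_simplex d v \<longleftrightarrow>
     (\<forall>i\<le>d. length (v i) = d) \<and>
     (\<forall>\<gamma>::nat \<Rightarrow> real.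
        (\<forall>j\<le>d. (\<Sum>i\<le>d. \<gamma> i * real_of_int (hvert v i ! j)) = 0) \<longrightarrow> (\<forall>i\<le>d. \<gamma> i = 0))"

text \<open>The lattice points of the fundamental parallelepiped, i.e. the set P(Delta).\<close>
definition fpp :: "nat \<Rightarrow> (nat \<Rightarrow> int list) \<Rightarrow> int list set" where
  "fpp d v = {x. length x = Suc d \<and>
     (\<exists>\<gamma>::nat \<Rightarrow> real. (\<forall>i\<le>d. 0 \<le> \<gamma> i \<and> \<gamma> i < 1) \<and>
        (\<forall>j\<le>d. real_of_int (x ! j) = (\<Sum>i\<le>d. \<gamma> i * real_of_int (hvert v i ! j))))}"

definition fpp_le :: "nat \<Rightarrow> (nat \<Rightarrow> int list) \<Rightarrow> int list \<Rightarrow> int list \<Rightarrow> bool" where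
  "fpp_le d v \<sigma> \<mu> \<longleftrightarrow> \<sigma> \<in> fpp d v \<and> \<mu> \<in> fpp d v \<and> lsub \<mu> \<sigma> \<in> fpp d v"

definition antichain_simplex :: "nat \<Rightarrow> (nat \<Rightarrow> int list) \<Rightarrow> bool" where
  "antichain_simplex d v \<longleftrightarrow>
     (\<forall>\<sigma>\<in>fpp d v - {lzero d}. \<forall>\<mu>\<in>fpp d v - {lzero d}. fpp_le d v \<sigma> \<mu> \<longrightarrow> \<sigma> = \<mu>)"

text \<open>Multiplication of basis elements of FPA(Delta):
e_sigma e_mu = e_(sigma+mu) if sigma+mu lies in P(Delta), and 0 (None) otherwise.\<close>
definition fpa_mult :: "nat \<Rightarrow> (nat \<Rightarrow> int list) \<Rightarrow> int list \<Rightarrow> int list \<Rightarrow> int list option" where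
  "fpa_mult d v \<sigma> \<mu> = (if ladd \<sigma> \<mu> \<in> fpp d v then Some (ladd \<sigma> \<mu>) else None)"

text \<open>Tor^R_i(K,K)_alpha for R = FPA(Delta) computed with the (normalized) bar resolution
of K over R: K \<otimes>_R (bar resolution) has, in homological degree i and multidegree alpha,
the K-basis e_s1|...|e_si with s_j nonzero elements of P(Delta) summing to alpha, and
differential d(a_1|...|a_i) = sum_{j=1}^{i-1} (-1)^j a_1|...|a_j a_(j+1)|...|a_i.
Chains are K-valued functions supported on this basis.\<close>
definition bar_basis :: "nat \<Rightarrow> (nat \<Rightarrow> int list) \<Rightarrow> nat \<Rightarrow> int list \<Rightarrow> int list list set" where
  "bar_basis d v i \<alpha> = {s. length s = i \<and> set s \<subseteq> fpp d v - {lzero d} \<and> lsum d s = \<alpha>}"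

definition bar_chains :: "'k::field itself \<Rightarrow> nat \<Rightarrow> (nat \<Rightarrow> int list) \<Rightarrow> nat \<Rightarrow> int list
    \<Rightarrow> (int list list \<Rightarrow> 'k) set" where
  "bar_chains K d v i \<alpha> = {c. \<forall>s. c s \<noteq> 0 \<longrightarrow> s \<in> bar_basis d v i \<alpha>}"

definition bar_d :: "nat \<Rightarrow> (nat \<Rightarrow> int list) \<Rightarrow> nat \<Rightarrow> int list
    \<Rightarrow> (int list list \<Rightarrow> 'k::field) \<Rightarrow> (int list list \<Rightarrow> 'k)" where
  "bar_d d v i \<alpha> c = (\<lambda>t. \<Sum>s\<in>bar_basis d v i \<alpha>. \<Sum>j<i - 1.
      (case fpa_mult d v (s ! j) (s ! Suc j) of
         None \<Rightarrow> 0
       | Some \<tau> \<Rightarrow> (if t = take j s @ \<tau> # drop (Suc (Suc j)) s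
                    then (- 1) ^ Suc j * c s else 0)))"

definition kdim :: "'k::field itself \<Rightarrow> (int list list \<Rightarrow> 'k) set \<Rightarrow> nat" where
  "kdim K W = vector_space.dim (\<lambda>(a::'k) f x. a * f x) W"

text \<open>Graded Betti number beta_{i,alpha}(K) = dim_K Tor_i^{FPA(Delta)}(K,K)_alpha
 = dim(cycles) - dim(boundaries).\<close>
definition betti :: "'k::field itself \<Rightarrow> nat \<Rightarrow> (nat \<Rightarrow> int list) \<Rightarrow> nat \<Rightarrow> int list \<Rightarrow> nat" where
  "betti K d v i \<alpha> =
     kdim K {c \<in> bar_chains K d v i \<alpha>. bar_d d v i \<alpha> c = 0}
     - kdim K (bar_d d v (Suc i) \<alpha> ` bar_chains K d v (Suc i) \<alpha>)"

end

theory Submission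
  imports Defs
begin

lemma fv: "vector_space (\<lambda>(a::'k::field) (f::int list list \<Rightarrow> 'k) x. a * f x)"
  by unfold_locales (auto simp: algebra_simps plus_fun_def fun_eq_iff)

lemma sum_app: "(sum f A) x = (\<Sum>a\<in>A. f a x)"
  by (induction A rule: infinite_finite_induct) auto

definition dl :: "int list list \<Rightarrow> int list list \<Rightarrow> 'k::field" where
  "dl s = (\<lambda>t. if t = s then 1 else 0)"

lemma kdim_supp:
  assumes fin: "finite S"
  shows "kdim (K::'k::field itself) {c. \<forall>s. c s \<noteq> (0::'k) \<longrightarrow> s \<in> S} = card S"
proof -
  interpret V: vector_space "\<lambda>(a::'k::field) (f::int list list \<Rightarrow> 'k) x. a * f x" by (rule fv)
  let ?B = "(dl :: _ \<Rightarrow> _ \<Rightarrow> 'k) ` S"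
  have inj: "inj_on (dl :: _ \<Rightarrow> _ \<Rightarrow> 'k) S"
    by (auto simp: inj_on_def dl_def fun_eq_iff)
  have sub: "?B \<subseteq> {c. \<forall>s. c s \<noteq> (0::'k) \<longrightarrow> s \<in> S}" by (auto simp: dl_def split: if_splits)
  have sp: "{c. \<forall>s. c s \<noteq> (0::'k) \<longrightarrow> s \<in> S} \<subseteq> V.span ?B"
  proof
    fix c :: "_ \<Rightarrow> 'k" assume c: "c \<in> {c. \<forall>s. c s \<noteq> (0::'k) \<longrightarrow> s \<in> S}"
    have "c = (\<Sum>s\<in>S. (\<lambda>x. c s * dl s x))"
    proof
      fix t
      have "(\<Sum>s\<in>S. (\<lambda>x. c s * dl s x)) t = (\<Sum>s\<in>S. c s * dl s t)"
        by (simp add: sum_app)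
      also have "\<dots> = (if t \<in> S then c t else 0)"
        using fin by (simp add: dl_def if_distrib cong: if_cong)
      also have "\<dots> = c t" using c by auto
      finally show "c t = (\<Sum>s\<in>S. (\<lambda>x. c s * dl s x)) t" by simp
    qed
    also have "\<dots> \<in> V.span ?B"
      by (intro V.span_sum V.span_scale[of _ _ "c _", simplified] V.span_base) auto
    finally show "c \<in> V.span ?B" .
  qed
  have ind: "V.independent ?B"
  proof (rule V.independent_if_scalars_zero)
    show "finite ?B" using fin by simp
    fix f x assume h: "(\<Sum>x\<in>?B. (\<lambda>y. f x * x y)) = 0" and x: "x \<in> ?B"
    then obtain s where s: "s \<in> S" "x = dl s" by auto
    have "0 = (\<Sum>x\<in>?B. (\<lambda>y. f x * x y)) s" using h by simp
    also have "\<dots> = (\<Sum>u\<in>S. f (dl u) * dl u s)"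
      by (simp add: sum_app sum.reindex[OF inj])
    also have "\<dots> = f (dl s)" using fin s by (simp add: dl_def if_distrib cong: if_cong)
    finally show "f x = 0" using s by simp
  qed
  have "card ?B = V.dim {c. \<forall>s. c s \<noteq> (0::'k) \<longrightarrow> s \<in> S}"
    by (rule V.basis_card_eq_dim[OF sub sp ind])
  then show ?thesis using card_image[OF inj] by (simp add: kdim_def)
qed

lemma kdim_zero: "kdim (K::'k::field itself) {0::int list list \<Rightarrow> 'k} = 0"
proof -
  interpret V: vector_space "\<lambda>(a::'k::field) (f::int list list \<Rightarrow> 'k) x. a * f x" by (rule fv)
  have "card {} = V.dim {0::int list list \<Rightarrow> 'k}"
    using V.basis_card_eq_dim[of "{}::(int list list \<Rightarrow> 'k) set" "{0}"]
    by (simp add: V.span_empty V.independent_empty)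
  then show ?thesis by (simp add: kdim_def)
qed

lemma ladd_len: "length (ladd x y) = min (length x) (length y)" by (simp add: ladd_def)
lemma ladd_nth: "j < length x \<Longrightarrow> j < length y \<Longrightarrow> ladd x y ! j = x ! j + y ! j"
  by (simp add: ladd_def)
lemma lsub_len: "length (lsub x y) = min (length x) (length y)" by (simp add: lsub_def)
lemma lsub_nth: "j < length x \<Longrightarrow> j < length y \<Longrightarrow> lsub x y ! j = x ! j - y ! j"
  by (simp add: lsub_def)

lemma ladd_eq_iff:
  assumes "length a = n" "length b = n" "length c = n"
  shows "ladd a b = c \<longleftrightarrow> b = lsub c a"
  using assms by (auto simp: list_eq_iff_nth_eq ladd_len lsub_len ladd_nth lsub_nth)

lemma fpp_len: "x \<in> fpp d v \<Longrightarrow> length x = Suc d" by (simp add: fpp_def)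

lemma fpp_finite: "finite (fpp d v)"
proof -
  define M where "M = (\<Sum>j\<le>d. \<Sum>i\<le>d. \<bar>hvert v i ! j\<bar>)"
  have "fpp d v \<subseteq> {xs. set xs \<subseteq> {-M..M} \<and> length xs = Suc d}"
  proof safe
    fix x assume x: "x \<in> fpp d v"
    then show "length x = Suc d" by (simp add: fpp_def)
    fix e assume "e \<in> set x"
    then obtain j where j: "j < Suc d" "e = x ! j" using \<open>length x = Suc d\<close> by (auto simp: in_set_conv_nth)
    from x obtain \<gamma> :: "nat \<Rightarrow> real" where g: "\<forall>i\<le>d. 0 \<le> \<gamma> i \<and> \<gamma> i < 1"
      and e: "\<forall>j\<le>d. real_of_int (x ! j) = (\<Sum>i\<le>d. \<gamma> i * real_of_int (hvert v i ! j))"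
      by (auto simp: fpp_def)
    have "\<bar>real_of_int e\<bar> = \<bar>\<Sum>i\<le>d. \<gamma> i * real_of_int (hvert v i ! j)\<bar>" using e j by auto
    also have "\<dots> \<le> (\<Sum>i\<le>d. \<bar>\<gamma> i * real_of_int (hvert v i ! j)\<bar>)" by (rule sum_abs)
    also have "\<dots> \<le> (\<Sum>i\<le>d. real_of_int \<bar>hvert v i ! j\<bar>)"
    proof (rule sum_mono)
      fix i assume "i \<in> {..d}"
      then have "0 \<le> \<gamma> i" "\<gamma> i \<le> 1" using g by auto
      then show "\<bar>\<gamma> i * real_of_int (hvert v i ! j)\<bar> \<le> real_of_int \<bar>hvert v i ! j\<bar>"
        by (simp add: abs_mult mult_left_le_one_le)
    qed
    also have "\<dots> = real_of_int (\<Sum>i\<le>d. \<bar>hvert v i ! j\<bar>)" by simp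
    finally have 1: "\<bar>e\<bar> \<le> (\<Sum>i\<le>d. \<bar>hvert v i ! j\<bar>)" by linarith
    have "(\<Sum>i\<le>d. \<bar>hvert v i ! j\<bar>) \<le> M" unfolding M_def
      using j by (intro member_le_sum) (auto intro: sum_nonneg)
    with 1 show "e \<in> {-M..M}" by auto
  qed
  then show ?thesis by (rule finite_subset) (simp add: finite_lists_length_eq)
qed

lemma fpp_head:
  assumes x: "x \<in> fpp d v" and nz: "x \<noteq> lzero d"
  shows "x ! 0 \<ge> 1"
proof -
  from x obtain \<gamma> :: "nat \<Rightarrow> real" where g: "\<forall>i\<le>d. 0 \<le> \<gamma> i \<and> \<gamma> i < 1"
    and e: "\<forall>j\<le>d. real_of_int (x ! j) = (\<Sum>i\<le>d. \<gamma> i * real_of_int (hvert v i ! j))"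
    and l: "length x = Suc d"
    by (auto simp: fpp_def)
  have h0: "real_of_int (x ! 0) = (\<Sum>i\<le>d. \<gamma> i)" using e by (simp add: hvert_def)
  show ?thesis
  proof (rule ccontr)
    assume "\<not> 1 \<le> x ! 0"
    moreover have "0 \<le> (\<Sum>i\<le>d. \<gamma> i)" using g by (intro sum_nonneg) auto
    ultimately have "x ! 0 = 0" using h0 by linarith
    then have "(\<Sum>i\<le>d. \<gamma> i) = 0" using h0 by simp
    then have "\<forall>i\<in>{..d}. \<gamma> i = 0" using g by (subst (asm) sum_nonneg_eq_0_iff) auto
    then have "\<forall>j\<le>d. x ! j = 0" using e by simp
    then have "x = lzero d" using l by (auto simp: lzero_def list_eq_iff_nth_eq simp del: replicate_Suc)
    with nz show False by simp
  qed
qed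

lemma lzero_head: "lzero d ! 0 = 0" by (simp add: lzero_def)
lemma lzero_len: "length (lzero d) = Suc d" by (simp add: lzero_def)

lemma mult_none:
  assumes ac: "antichain_simplex d v" and s: "\<sigma> \<in> fpp d v - {lzero d}" and m: "\<mu> \<in> fpp d v - {lzero d}"
  shows "fpa_mult d v \<sigma> \<mu> = None"
proof (rule ccontr)
  assume "fpa_mult d v \<sigma> \<mu> \<noteq> None"
  then have sm: "ladd \<sigma> \<mu> \<in> fpp d v" by (auto simp: fpa_mult_def split: if_splits)
  have ls: "length \<sigma> = Suc d" "length \<mu> = Suc d" using s m fpp_len by auto
  have h: "\<sigma> ! 0 \<ge> 1" "\<mu> ! 0 \<ge> 1" using s m fpp_head by auto
  have hs: "ladd \<sigma> \<mu> ! 0 = \<sigma> ! 0 + \<mu> ! 0" using ls by (simp add: ladd_nth)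
  have nz: "ladd \<sigma> \<mu> \<noteq> lzero d"
  proof
    assume "ladd \<sigma> \<mu> = lzero d"
    then have "ladd \<sigma> \<mu> ! 0 = 0" by (simp add: lzero_head)
    with hs h show False by simp
  qed
  have "lsub (ladd \<sigma> \<mu>) \<sigma> = \<mu>" using ladd_eq_iff[of \<sigma> "Suc d" \<mu> "ladd \<sigma> \<mu>"] ls
    by (simp add: ladd_len)
  then have "fpp_le d v \<sigma> (ladd \<sigma> \<mu>)" using s m sm by (simp add: fpp_le_def)
  then have "\<sigma> = ladd \<sigma> \<mu>" using ac s sm nz by (auto simp: antichain_simplex_def)
  then have "\<mu> ! 0 = 0" using hs by simp
  with h show False by simp
qed

lemma bar_d_zero:
  assumes ac: "antichain_simplex d v"
  shows "bar_d d v i \<alpha> c = 0"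
proof -
  have "\<And>s j. s \<in> bar_basis d v i \<alpha> \<Longrightarrow> j < i - 1 \<Longrightarrow> fpa_mult d v (s ! j) (s ! Suc j) = None"
  proof -
    fix s j assume s: "s \<in> bar_basis d v i \<alpha>" and j: "j < i - 1"
    then have "length s = i" "set s \<subseteq> fpp d v - {lzero d}" by (auto simp: bar_basis_def)
    moreover have "j < length s" "Suc j < length s" using j \<open>length s = i\<close> by auto
    ultimately have "s ! j \<in> fpp d v - {lzero d}" "s ! Suc j \<in> fpp d v - {lzero d}"
      using nth_mem[of j s] nth_mem[of "Suc j" s] by blast+
    then show "fpa_mult d v (s ! j) (s ! Suc j) = None" using mult_none[OF ac] by blast
  qed
  then show ?thesis by (simp add: bar_d_def fun_eq_iff)
qed

lemma lsum_len: "set s \<subseteq> fpp d v \<Longrightarrow> length (lsum d s) = Suc d"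
  by (induction s) (auto simp: lsum_def lzero_len ladd_len fpp_len)

lemma bar_basis_finite: "finite (bar_basis d v i \<alpha>)"
proof -
  have "bar_basis d v i \<alpha> \<subseteq> {s. set s \<subseteq> fpp d v - {lzero d} \<and> length s = i}"
    by (auto simp: bar_basis_def)
  then show ?thesis by (rule finite_subset) (simp add: finite_lists_length_eq fpp_finite)
qed

lemma betti_card:
  assumes ac: "antichain_simplex d v"
  shows "betti K d v i \<alpha> = card (bar_basis d v i \<alpha>)"
proof -
  have 1: "{c \<in> bar_chains K d v i \<alpha>. bar_d d v i \<alpha> c = 0} = {c. \<forall>s. c s \<noteq> 0 \<longrightarrow> s \<in> bar_basis d v i \<alpha>}"
    using bar_d_zero[OF ac] by (auto simp: bar_chains_def)
  have 2: "bar_d d v (Suc i) \<alpha> ` bar_chains K d v (Suc i) \<alpha> = {0}"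
    using bar_d_zero[OF ac] by (auto simp: bar_chains_def intro!: image_eqI[of _ _ "\<lambda>_. 0"])
  show ?thesis unfolding betti_def 1 2 kdim_zero kdim_supp[OF bar_basis_finite] by simp
qed

lemma bar_basis_Suc:
  assumes l: "length \<alpha> = Suc d"
  shows "bar_basis d v (Suc i) \<alpha> = (\<Union>\<sigma>\<in>fpp d v - {lzero d}. (Cons \<sigma>) ` bar_basis d v i (lsub \<alpha> \<sigma>))"
proof (intro equalityI subsetI)
  fix s assume s: "s \<in> bar_basis d v (Suc i) \<alpha>"
  then obtain \<sigma> t where st: "s = \<sigma> # t" by (cases s) (auto simp: bar_basis_def)
  have ss: "\<sigma> \<in> fpp d v - {lzero d}" "set t \<subseteq> fpp d v - {lzero d}" "length t = i"
    "ladd \<sigma> (lsum d t) = \<alpha>" using s st by (auto simp: bar_basis_def lsum_def)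
  have "lsum d t = lsub \<alpha> \<sigma>"
    using ladd_eq_iff[of \<sigma> "Suc d" "lsum d t" \<alpha>] ss l fpp_len lsum_len[of t d v] by auto
  then show "s \<in> (\<Union>\<sigma>\<in>fpp d v - {lzero d}. (Cons \<sigma>) ` bar_basis d v i (lsub \<alpha> \<sigma>))"
    using ss st by (auto simp: bar_basis_def)
next
  fix s assume "s \<in> (\<Union>\<sigma>\<in>fpp d v - {lzero d}. (Cons \<sigma>) ` bar_basis d v i (lsub \<alpha> \<sigma>))"
  then obtain \<sigma> t where st: "s = \<sigma> # t" and "\<sigma> \<in> fpp d v" "\<sigma> \<noteq> lzero d" "t \<in> bar_basis d v i (lsub \<alpha> \<sigma>)"
    by blast
  moreover have "length \<sigma> = Suc d" using \<open>\<sigma> \<in> fpp d v\<close> fpp_len by auto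
  moreover have "length (lsum d t) = Suc d" using \<open>t \<in> bar_basis d v i (lsub \<alpha> \<sigma>)\<close> lsum_len[of t d v]
    by (auto simp: bar_basis_def)
  moreover have "lsum d t = lsub \<alpha> \<sigma>" using \<open>t \<in> bar_basis d v i (lsub \<alpha> \<sigma>)\<close>
    by (simp add: bar_basis_def)
  ultimately have "ladd \<sigma> (lsum d t) = \<alpha>"
    using ladd_eq_iff[of \<sigma> "Suc d" "lsum d t" \<alpha>] l by blast
  then have "lsum d s = \<alpha>" unfolding st by (simp add: lsum_def)
  then show "s \<in> bar_basis d v (Suc i) \<alpha>" unfolding st
    using \<open>t \<in> bar_basis d v i (lsub \<alpha> \<sigma>)\<close> \<open>\<sigma> \<in> fpp d v\<close> \<open>\<sigma> \<noteq> lzero d\<close>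
    by (simp add: bar_basis_def)
qed

lemma card_Suc:
  assumes l: "length \<alpha> = Suc d"
  shows "card (bar_basis d v (Suc i) \<alpha>) = (\<Sum>\<sigma>\<in>fpp d v - {lzero d}. card (bar_basis d v i (lsub \<alpha> \<sigma>)))"
  unfolding bar_basis_Suc[OF l]
proof (subst card_UN_disjoint)
  show "finite (fpp d v - {lzero d})" by (simp add: fpp_finite)
  show "\<forall>\<sigma>\<in>fpp d v - {lzero d}. finite ((#) \<sigma> ` bar_basis d v i (lsub \<alpha> \<sigma>))"
    by (simp add: bar_basis_finite)
  show "\<forall>\<sigma>\<in>fpp d v - {lzero d}. \<forall>\<tau>\<in>fpp d v - {lzero d}. \<sigma> \<noteq> \<tau> \<longrightarrow>
     (#) \<sigma> ` bar_basis d v i (lsub \<alpha> \<sigma>) \<inter> (#) \<tau> ` bar_basis d v i (lsub \<alpha> \<tau>) = {}"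
    by blast
  show "(\<Sum>\<sigma>\<in>fpp d v - {lzero d}. card ((#) \<sigma> ` bar_basis d v i (lsub \<alpha> \<sigma>))) =
    (\<Sum>\<sigma>\<in>fpp d v - {lzero d}. card (bar_basis d v i (lsub \<alpha> \<sigma>)))"
    by (intro sum.cong refl card_image) simp
qed

theorem theorem5p6:
  fixes K :: "'k::field itself" and d :: nat and v :: "nat \<Rightarrow> int list"
  assumes "lattice_simplex d v" and "antichain_simplex d v"
  shows "\<forall>i \<alpha>. length \<alpha> = Suc d \<longrightarrow>
           int (betti K d v i \<alpha>)
           - (if i = 0 then 0
              else (\<Sum>\<sigma>\<in>fpp d v - {lzero d}. int (betti K d v (i - 1) (lsub \<alpha> \<sigma>))))
           = (if i = 0 \<and> \<alpha> = lzero d then 1 else 0)"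
proof (intro allI impI)
  fix i and \<alpha> :: "int list" assume l: "length \<alpha> = Suc d"
  note bc = betti_card[OF assms(2)]
  show "int (betti K d v i \<alpha>)
           - (if i = 0 then 0
              else (\<Sum>\<sigma>\<in>fpp d v - {lzero d}. int (betti K d v (i - 1) (lsub \<alpha> \<sigma>))))
           = (if i = 0 \<and> \<alpha> = lzero d then 1 else 0)"
  proof (cases i)
    case 0
    have "bar_basis d v 0 \<alpha> = (if \<alpha> = lzero d then {[]} else {})"
      by (auto simp: bar_basis_def lsum_def)
    then show ?thesis using 0 by (simp add: bc)
  next
    case (Suc k)
    have "int (card (bar_basis d v (Suc k) \<alpha>)) = (\<Sum>\<sigma>\<in>fpp d v - {lzero d}. int (card (bar_basis d v k (lsub \<alpha> \<sigma>))))"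
      unfolding card_Suc[OF l, of v k] by (simp only: of_nat_sum)
    then show ?thesis using Suc by (simp only: bc) simp
  qed
qed

end
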